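(* Let $0<d<1$ and $c>0$ be constants. There is a constant $c'>0$ (depending only on $c,d$) such that the following holds. Let $m,n$ be positive integers with $n\leq m^d$ and $m\ge 2$, and suppose there is a scheme encoding every set $S\subseteq[m]$ with $|S|\leq n$ as a bit string $\phi(S)\in\{0,1\}^s$ with $s\leq c\,n\log_2 m$, together with a quantum bit-probe query algorithm that, given any query $i\in[m]$ and oracle access to $\phi(S)$, makes at most $t$ bit-probes and answers the question "$i\in S$?" either exactly, or with one-sided error (it always answers "No" when $i\notin S$, and when $i\in S$ it answers incorrectly with probability at most $\epsilon$ for some fixed $\epsilon<1$). Then $t\geq c'\log_2 m$. That is, set membership data structures using $O(n\log m)$ bits require $\Omega(\log m)$ bit-probes in this model.
   Context: $[m]=\{0,\dots,m-1\}$. Quantum bit-probe model: the algorithm operates on $\mathcal H_L\otimes\mathcal H_B\otimes\mathcal H_Z$ (address qubits indexing positions of the $s$-bit string, one data qubit, arbitrary workspace). For $x\in\{0,1\}^s$ the oracle $O_x$ acts by $|l\rangle|b\rangle|z\rangle\mapsto|l\rangle|b\oplus x_l\rangle|z\rangle$. A $t$-probe algorithm is a sequence of input-independent unitaries $U_0,\dots,U_t$; on query $i$ it starts from a fixed basis state encoding $i$, applies $U_tO_xU_{t-1}O_x\cdots U_1O_xU_0$, and measures designated output qubits in the computational basis to obtain its answer. *)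

theory Defs
  imports "HOL-Analysis.Analysis"
begin

(* The state space is H_L (x) H_B (x) H_Z with
  computational basis |l,b,z>, l < s (address), b :: bool (data qubit),
  z < w (workspace, of arbitrary finite dimension w).  A basis label is a
  triple (l,b,z); vectors are functions from labels to complex amplitudes and
  operators are matrices indexed by labels, both restricted to the basis set. *)

type_synonym blabel = "nat \<times> bool \<times> nat"

definition qbasis :: "nat \<Rightarrow> nat \<Rightarrow> blabel set" where
  "qbasis s w = {..<s} \<times> (UNIV :: bool set) \<times> {..<w}"

(* A matrix U (entries U i j) is unitary on the space spanned by qbasis s w
  (U^* U = I; in finite dimension this is equivalent to unitarity). *)
definition is_unitary :: "nat \<Rightarrow> nat \<Rightarrow> (blabel \<Rightarrow> blabel \<Rightarrow> complex) \<Rightarrow> bool" where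
  "is_unitary s w U \<longleftrightarrow>
     (\<forall>j\<in>qbasis s w. \<forall>k\<in>qbasis s w.
        (\<Sum>i\<in>qbasis s w. cnj (U i j) * U i k) = (if j = k then 1 else 0))"

definition apply_op :: "nat \<Rightarrow> nat \<Rightarrow> (blabel \<Rightarrow> blabel \<Rightarrow> complex) \<Rightarrow> (blabel \<Rightarrow> complex) \<Rightarrow> (blabel \<Rightarrow> complex)" where
  "apply_op s w U v = (\<lambda>i. \<Sum>j\<in>qbasis s w. U i j * v j)"

(* Oracle O_x : |l,b,z> to |l, b xor x_l, z>, where x :: nat \<Rightarrow> bool gives the
  bits x_0,...,x_{s-1} (only l < s is ever used). *)
definition probe_op :: "(nat \<Rightarrow> bool) \<Rightarrow> (blabel \<Rightarrow> complex) \<Rightarrow> (blabel \<Rightarrow> complex)" where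
  "probe_op x v = (\<lambda>(l, b, z). v (l, b \<noteq> x l, z))"

definition basis_vec :: "blabel \<Rightarrow> (blabel \<Rightarrow> complex)" where
  "basis_vec q = (\<lambda>i. if i = q then 1 else 0)"

(* Final state U_t O_x U_{t-1} ... U_1 O_x U_0 |q>, where Us = [U_1,...,U_t];
  the number of probes is length Us. *)
definition final_state :: "nat \<Rightarrow> nat \<Rightarrow> (blabel \<Rightarrow> blabel \<Rightarrow> complex) \<Rightarrow>
    (blabel \<Rightarrow> blabel \<Rightarrow> complex) list \<Rightarrow> (nat \<Rightarrow> bool) \<Rightarrow> blabel \<Rightarrow> (blabel \<Rightarrow> complex)" where
  "final_state s w U0 Us x q =
     foldl (\<lambda>v U. apply_op s w U (probe_op x v)) (apply_op s w U0 (basis_vec q)) Us"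

(* Probability that measuring the final state in the computational basis
  yields an outcome in Acc (outcomes answered "Yes"). *)
definition accept_prob :: "nat \<Rightarrow> nat \<Rightarrow> (blabel \<Rightarrow> blabel \<Rightarrow> complex) \<Rightarrow>
    (blabel \<Rightarrow> blabel \<Rightarrow> complex) list \<Rightarrow> blabel set \<Rightarrow> (nat \<Rightarrow> bool) \<Rightarrow> blabel \<Rightarrow> real" where
  "accept_prob s w U0 Us Acc x q =
     (\<Sum>i\<in>qbasis s w \<inter> Acc. (cmod (final_state s w U0 Us x q i))\<^sup>2)"

end

theory Submission
  imports Defs "HOL-Library.Function_Algebras"
begin

definition chi :: "nat set \<Rightarrow> (nat \<Rightarrow> bool) \<Rightarrow> complex" where
  "chi A x = (if \<forall>l\<in>A. x l then 1 else 0)"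

definition subs :: "nat \<Rightarrow> nat \<Rightarrow> nat set set" where
  "subs s k = {A. A \<subseteq> {..<s} \<and> card A \<le> k}"

lemma finite_subs: "finite (subs s k)"
  unfolding subs_def by (rule finite_subset[of _ "Pow {..<s}"]) auto

definition polyk :: "nat \<Rightarrow> nat \<Rightarrow> ((nat \<Rightarrow> bool) \<Rightarrow> complex) \<Rightarrow> bool" where
  "polyk s k f \<longleftrightarrow> (\<exists>c. \<forall>x. f x = (\<Sum>A\<in>subs s k. c A * chi A x))"

lemma polyk_chi: "A \<in> subs s k \<Longrightarrow> polyk s k (\<lambda>x. a * chi A x)"
  unfolding polyk_def
proof (rule exI[of _ "\<lambda>B. if B = A then a else 0"], intro allI)
  fix x assume "A \<in> subs s k"
  have "(\<Sum>B\<in>subs s k. (if B = A then a else 0) * chi B x) = (\<Sum>B\<in>subs s k. if B = A then a * chi A x else 0)"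
    by (intro sum.cong) auto
  also have "\<dots> = a * chi A x" using \<open>A \<in> subs s k\<close> by (simp add: finite_subs)
  finally show "a * chi A x = (\<Sum>B\<in>subs s k. (if B = A then a else 0) * chi B x)" by simp
qed

lemma polyk_const: "polyk s k (\<lambda>x. a)"
proof -
  have "{} \<in> subs s k" by (simp add: subs_def)
  from polyk_chi[OF this, of a] show ?thesis by (simp add: chi_def)
qed

lemma polyk_add: "polyk s k f \<Longrightarrow> polyk s k g \<Longrightarrow> polyk s k (\<lambda>x. f x + g x)"
  unfolding polyk_def
  apply clarify
  subgoal for c d by (rule exI[of _ "\<lambda>A. c A + d A"]) (simp add: distrib_right sum.distrib)
  done

lemma polyk_sum: "finite I \<Longrightarrow> (\<And>i. i \<in> I \<Longrightarrow> polyk s k (f i)) \<Longrightarrow> polyk s k (\<lambda>x. \<Sum>i\<in>I. f i x)"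
  by (induction I rule: finite_induct) (auto intro: polyk_add polyk_const)

lemma polyk_cmult: "polyk s k f \<Longrightarrow> polyk s k (\<lambda>x. a * f x)"
  unfolding polyk_def
  apply clarify
  subgoal for c by (rule exI[of _ "\<lambda>A. a * c A"]) (simp add: sum_distrib_left mult.assoc)
  done

lemma polyk_mono: "polyk s k f \<Longrightarrow> k \<le> k' \<Longrightarrow> polyk s k' f"
proof -
  assume "polyk s k f" "k \<le> k'"
  then obtain c where c: "\<And>x. f x = (\<Sum>A\<in>subs s k. c A * chi A x)" unfolding polyk_def by blast
  have "polyk s k' (\<lambda>x. \<Sum>A\<in>subs s k. c A * chi A x)"
    by (rule polyk_sum[OF finite_subs]) (rule polyk_chi, use \<open>k \<le> k'\<close> in \<open>auto simp: subs_def\<close>)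
  moreover have "f = (\<lambda>x. \<Sum>A\<in>subs s k. c A * chi A x)" using c by (simp add: fun_eq_iff)
  ultimately show ?thesis by simp
qed

lemma chi_mult: "chi A x * chi B x = chi (A \<union> B) x"
  by (auto simp: chi_def)

lemma polyk_mult: "polyk s k1 f \<Longrightarrow> polyk s k2 g \<Longrightarrow> polyk s (k1 + k2) (\<lambda>x. f x * g x)"
proof -
  assume "polyk s k1 f" "polyk s k2 g"
  then obtain c d where c: "\<And>x. f x = (\<Sum>A\<in>subs s k1. c A * chi A x)"
    and d: "\<And>x. g x = (\<Sum>A\<in>subs s k2. d A * chi A x)" unfolding polyk_def by blast
  have e: "f x * g x = (\<Sum>A\<in>subs s k1. \<Sum>B\<in>subs s k2. (c A * d B) * chi (A \<union> B) x)" for x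
    unfolding c d sum_product by (intro sum.cong refl) (simp add: chi_mult[symmetric] algebra_simps)
  have "polyk s (k1 + k2) (\<lambda>x. \<Sum>A\<in>subs s k1. \<Sum>B\<in>subs s k2. (c A * d B) * chi (A \<union> B) x)"
  proof (intro polyk_sum finite_subs polyk_chi)
    fix A B assume "A \<in> subs s k1" "B \<in> subs s k2"
    then show "A \<union> B \<in> subs s (k1 + k2)"
      unfolding subs_def using card_Un_le[of A B] by auto
  qed
  then show ?thesis using e by simp
qed

lemma polyk_cnj: "polyk s k f \<Longrightarrow> polyk s k (\<lambda>x. cnj (f x))"
  unfolding polyk_def
  apply clarify
  subgoal for c by (rule exI[of _ "\<lambda>A. cnj (c A)"]) (simp add: chi_def if_distrib cong: if_cong)
  done

lemma polyk_prod: "finite T \<Longrightarrow> (\<And>i. i \<in> T \<Longrightarrow> polyk s k (f i)) \<Longrightarrow> polyk s (k * card T) (\<lambda>x. \<Prod>i\<in>T. f i x)"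
proof (induction T rule: finite_induct)
  case empty then show ?case by (simp add: polyk_const)
next
  case (insert a T)
  have "polyk s (k + k * card T) (\<lambda>x. f a x * (\<Prod>i\<in>T. f i x))"
    using insert by (intro polyk_mult) auto
  then show ?case using insert by (simp add: add.commute)
qed

lemma polyk_chi1: "l < s \<Longrightarrow> polyk s 1 (chi {l})"
  using polyk_chi[of "{l}" s 1 1] by (simp add: subs_def)

lemma probe_poly:
  assumes "\<And>j. polyk s k (\<lambda>x. v0 x j)" "j \<in> qbasis s w"
  shows "polyk s (k + 1) (\<lambda>x. probe_op x (v0 x) j)"
proof -
  obtain l b z where j: "j = (l, b, z)" by (cases j) auto
  with assms(2) have l: "l < s" by (simp add: qbasis_def)
  have e: "probe_op x (v0 x) j = chi {l} x * v0 x (l, \<not> b, z) + (1 + (-1) * chi {l} x) * v0 x (l, b, z)" for x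
    by (simp add: probe_op_def j chi_def)
  have "polyk s (1 + k) (\<lambda>x. chi {l} x * v0 x (l, \<not> b, z) + (1 + (-1) * chi {l} x) * v0 x (l, b, z))"
    by (intro polyk_add polyk_mult polyk_cmult polyk_const polyk_chi1 l assms(1))
  then show ?thesis unfolding e by (simp add: add.commute)
qed

lemma fold_poly:
  "(\<And>j. polyk s k (\<lambda>x. v0 x j)) \<Longrightarrow>
   polyk s (k + length Us) (\<lambda>x. foldl (\<lambda>v U. apply_op s w U (probe_op x v)) (v0 x) Us j)"
proof (induction Us arbitrary: v0 k j)
  case Nil then show ?case by simp
next
  case (Cons U Us)
  have "polyk s (k + 1) (\<lambda>x. apply_op s w U (probe_op x (v0 x)) j)" for j
    unfolding apply_op_def
    by (intro polyk_sum polyk_cmult probe_poly Cons.prems) (auto simp: qbasis_def)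
  from Cons.IH[OF this] show ?case by simp
qed

lemma final_poly: "polyk s (length Us) (\<lambda>x. final_state s w U0 Us x q j)"
  unfolding final_state_def
  using fold_poly[of s 0 "\<lambda>x. apply_op s w U0 (basis_vec q)" Us w j] by (simp add: polyk_const)

lemma accept_poly: "polyk s (2 * length Us) (\<lambda>x. complex_of_real (accept_prob s w U0 Us Acc x q))"
proof -
  have e: "complex_of_real (accept_prob s w U0 Us Acc x q) =
    (\<Sum>i\<in>qbasis s w \<inter> Acc. final_state s w U0 Us x q i * cnj (final_state s w U0 Us x q i))" for x
    unfolding accept_prob_def of_real_sum by (intro sum.cong refl) (simp add: complex_norm_square[symmetric])
  have "polyk s (length Us + length Us) (\<lambda>x. \<Sum>i\<in>qbasis s w \<inter> Acc. final_state s w U0 Us x q i * cnj (final_state s w U0 Us x q i))"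
    by (intro polyk_sum polyk_mult polyk_cnj final_poly) (auto simp: qbasis_def)
  then show ?thesis unfolding e by (simp add: mult_2)
qed

interpretation fv: vector_space "\<lambda>(c::complex) (f::'a \<Rightarrow> complex) x. c * f x"
  by unfold_locales (auto simp: fun_eq_iff algebra_simps)

lemma sum_fun_apply: "(sum f I) x = (\<Sum>i\<in>I. f i x)"
  by (induction I rule: infinite_finite_induct) auto

lemma dim_bound:
  fixes F :: "'a set" and p :: "'a \<Rightarrow> nat \<Rightarrow> bool" and Q :: "'a \<Rightarrow> (nat \<Rightarrow> bool) \<Rightarrow> complex"
  assumes fin: "finite F" and pol: "\<And>T. T \<in> F \<Longrightarrow> polyk s K (Q T)"
    and nz: "\<And>T. T \<in> F \<Longrightarrow> Q T (p T) \<noteq> 0"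
    and zz: "\<And>T T'. T \<in> F \<Longrightarrow> T' \<in> F \<Longrightarrow> T \<noteq> T' \<Longrightarrow> Q T (p T') = 0"
  shows "card F \<le> card (subs s K)"
proof -
  have inj: "inj_on Q F"
  proof (rule inj_onI)
    fix T T' assume "T \<in> F" "T' \<in> F" "Q T = Q T'"
    then show "T = T'" using nz[of T] zz[of T' T] by (metis)
  qed
  have ind: "fv.independent (Q ` F)"
    unfolding fv.independent_explicit_finite_subsets
  proof (intro allI impI ballI)
    fix S u v assume S: "S \<subseteq> Q ` F" "finite S"
      and z: "(\<Sum>v\<in>S. (\<lambda>x. u v * v x)) = 0" and v: "v \<in> S"
    then obtain T where T: "T \<in> F" "v = Q T" by auto
    have "0 = (\<Sum>v\<in>S. (\<lambda>x. u v * v x)) (p T)" using z by simp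
    also have "\<dots> = (\<Sum>v'\<in>S. u v' * v' (p T))" by (simp add: sum_fun_apply)
    also have "\<dots> = u v * v (p T)"
    proof (rule sum.remove[OF S(2) v, THEN trans], simp, rule sum.neutral, intro ballI)
      fix v' assume "v' \<in> S - {v}"
      then obtain T' where "T' \<in> F" "v' = Q T'" "T' \<noteq> T" using S T by auto
      then show "u v' * v' (p T) = 0" using zz T by auto
    qed
    finally show "u v = 0" using nz T by simp
  qed
  have sp: "Q ` F \<subseteq> fv.span (chi ` subs s K)"
  proof
    fix v assume "v \<in> Q ` F"
    then obtain T where "T \<in> F" "v = Q T" by auto
    then obtain c where c: "\<And>x. v x = (\<Sum>A\<in>subs s K. c A * chi A x)" using pol unfolding polyk_def by blast
    have "v = (\<Sum>A\<in>subs s K. (\<lambda>x. c A * chi A x))"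
      by (simp add: fun_eq_iff sum_fun_apply c)
    also have "\<dots> \<in> fv.span (chi ` subs s K)"
    proof (intro fv.span_sum)
      fix A assume "A \<in> subs s K"
      then have "chi A \<in> fv.span (chi ` subs s K)" by (intro fv.span_base) auto
      from fv.span_scale[OF this, of "c A"] show "(\<lambda>x. c A * chi A x) \<in> fv.span (chi ` subs s K)" .
    qed
    finally show "v \<in> fv.span (chi ` subs s K)" .
  qed
  have "card (Q ` F) \<le> card (chi ` subs s K)"
    using fv.independent_span_bound[OF _ ind sp] finite_subs by auto
  also have "\<dots> \<le> card (subs s K)" by (rule card_image_le[OF finite_subs])
  finally show ?thesis using card_image[OF inj] by simp
qed

lemma sum_pow_card: "finite S \<Longrightarrow> (\<Sum>A\<in>Pow S. (y::real) ^ card A) = (1 + y) ^ card S"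
proof (induction S rule: finite_induct)
  case empty then show ?case by simp
next
  case (insert a S)
  have inj: "inj_on (insert a) (Pow S)" using insert(2)
    by (intro inj_onI) (metis Pow_iff insert_absorb insert_ident subset_iff)
  have disj: "Pow S \<inter> insert a ` Pow S = {}" using insert(2) by auto
  have "(\<Sum>A\<in>Pow (insert a S). y ^ card A) = (\<Sum>A\<in>Pow S. y ^ card A) + (\<Sum>A\<in>insert a ` Pow S. y ^ card A)"
    unfolding Pow_insert using insert(1) disj by (intro sum.union_disjoint) auto
  also have "(\<Sum>A\<in>insert a ` Pow S. y ^ card A) = (\<Sum>A\<in>Pow S. y ^ card (insert a A))"
    by (rule sum.reindex[OF inj, unfolded comp_def])
  also have "\<dots> = (\<Sum>A\<in>Pow S. y * y ^ card A)"
  proof (intro sum.cong refl)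
    fix A assume "A \<in> Pow S"
    then have "finite A" "a \<notin> A" using insert(1,2) finite_subset by auto
    then show "y ^ card (insert a A) = y * y ^ card A" by simp
  qed
  finally show ?case using insert by (simp add: sum_distrib_left[symmetric] algebra_simps)
qed

lemma card_subs_bound:
  assumes "0 < y" "y \<le> (1::real)"
  shows "real (card (subs s K)) \<le> (1 + y) ^ s / y ^ K"
proof -
  have "real (card (subs s K)) = (\<Sum>A\<in>subs s K. 1)" by simp
  also have "\<dots> \<le> (\<Sum>A\<in>subs s K. y ^ card A / y ^ K)"
  proof (intro sum_mono)
    fix A assume "A \<in> subs s K"
    then have "card A \<le> K" by (simp add: subs_def)
    then have "y ^ K \<le> y ^ card A" using assms by (intro power_decreasing) auto
    then show "1 \<le> y ^ card A / y ^ K" using assms by simp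
  qed
  also have "\<dots> \<le> (\<Sum>A\<in>Pow {..<s}. y ^ card A / y ^ K)"
    using assms by (intro sum_mono2) (auto simp: subs_def)
  also have "\<dots> = (1 + y) ^ s / y ^ K"
    by (simp add: sum_divide_distrib[symmetric] sum_pow_card)
  finally show ?thesis .
qed

lemma combin_bound:
  fixes m n s t :: nat and \<epsilon> :: real and \<phi> :: "nat set \<Rightarrow> nat \<Rightarrow> bool"
  assumes "length Us \<le> t" "\<epsilon> < 1"
    and H: "\<forall>S. S \<subseteq> {..<m} \<and> card S \<le> n \<longrightarrow>
               (\<forall>i<m. (i \<notin> S \<longrightarrow> accept_prob s w U0 Us Acc (\<phi> S) (init i) = 0)
                    \<and> (i \<in> S \<longrightarrow> accept_prob s w U0 Us Acc (\<phi> S) (init i) \<ge> 1 - \<epsilon>))"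
  shows "m choose n \<le> card (subs s (2 * t * n))"
proof -
  define F where "F = {T. T \<subseteq> {..<m} \<and> card T = n}"
  define Q where "Q T x = (\<Prod>i\<in>T. complex_of_real (accept_prob s w U0 Us Acc x (init i)))" for T x
  have "card F \<le> card (subs s (2 * t * n))"
  proof (rule dim_bound[where p = \<phi> and Q = Q])
    show "finite F" unfolding F_def by (rule finite_subset[of _ "Pow {..<m}"]) auto
  next
    fix T assume T: "T \<in> F"
    then have fT: "finite T" "card T = n" unfolding F_def using finite_subset by auto
    have "polyk s (2 * length Us * card T) (Q T)"
      unfolding Q_def[abs_def] by (intro polyk_prod fT accept_poly)
    then show "polyk s (2 * t * n) (Q T)"
      by (rule polyk_mono) (use fT assms(1) in auto)
  next
    fix T assume T: "T \<in> F"
    then have fT: "finite T" "T \<subseteq> {..<m}" "card T \<le> n" unfolding F_def using finite_subset by auto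
    have "\<forall>i\<in>T. accept_prob s w U0 Us Acc (\<phi> T) (init i) \<ge> 1 - \<epsilon>"
      using H fT by blast
    then have "\<forall>i\<in>T. accept_prob s w U0 Us Acc (\<phi> T) (init i) \<noteq> 0" using assms(2) by force
    then show "Q T (\<phi> T) \<noteq> 0" unfolding Q_def using fT by simp
  next
    fix T T' assume T: "T \<in> F" "T' \<in> F" "T \<noteq> T'"
    then have fT: "finite T" "T \<subseteq> {..<m}" "finite T'" "T' \<subseteq> {..<m}" "card T' \<le> n" "card T = card T'"
      unfolding F_def using finite_subset by auto
    have "\<not> T \<subseteq> T'" using card_subset_eq[OF fT(3) _ fT(6)] T(3) by blast
    then obtain i where i: "i \<in> T" "i \<notin> T'" by blast
    then have "i < m" using fT by auto
    then have "accept_prob s w U0 Us Acc (\<phi> T') (init i) = 0" using H fT i by blast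
    then show "Q T (\<phi> T') = 0" unfolding Q_def using fT i by (simp add: prod_zero_iff) blast
  qed
  moreover have "card F = m choose n" unfolding F_def by (rule n_subsets[of "{..<m}", simplified])
  ultimately show ?thesis by simp
qed

theorem mainTheorem7:
  fixes d c :: real
  assumes "0 < d" and "d < 1" and "0 < c"
  shows "\<exists>c' > 0. \<forall>(m::nat) (n::nat) (s::nat) (t::nat) (\<epsilon>::real)
            (\<phi>::nat set \<Rightarrow> nat \<Rightarrow> bool) (w::nat)
            (U0::blabel \<Rightarrow> blabel \<Rightarrow> complex) (Us::(blabel \<Rightarrow> blabel \<Rightarrow> complex) list)
            (init::nat \<Rightarrow> blabel) (Acc::blabel set).
          1 \<le> n \<and> 2 \<le> m \<and> real n \<le> real m powr d
          \<and> real s \<le> c * real n * log 2 (real m)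
          \<and> 1 \<le> w
          \<and> is_unitary s w U0 \<and> (\<forall>U\<in>set Us. is_unitary s w U)
          \<and> (\<forall>i<m. init i \<in> qbasis s w)
          \<and> length Us \<le> t
          \<and> \<epsilon> < 1
          \<and> (\<forall>S. S \<subseteq> {..<m} \<and> card S \<le> n \<longrightarrow>
               (\<forall>i<m. (i \<notin> S \<longrightarrow> accept_prob s w U0 Us Acc (\<phi> S) (init i) = 0)
                    \<and> (i \<in> S \<longrightarrow> accept_prob s w U0 Us Acc (\<phi> S) (init i) \<ge> 1 - \<epsilon>)))
          \<longrightarrow> c' * log 2 (real m) \<le> real t"
proof -
  define y where "y = min (1/2) ((1 - d) * ln 2 / (2 * c))"
  have y0: "0 < y" using assms unfolding y_def by auto
  have y1: "y \<le> 1/2" unfolding y_def by auto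
  have y2: "y \<le> (1 - d) * ln 2 / (2 * c)" unfolding y_def by auto
  have ly: "ln 2 \<le> ln (1 / y)" using y0 y1 by (subst ln_le_cancel_iff) (auto simp: field_simps)
  have ly0: "0 < ln (1 / y)" using ly by (smt (verit) ln_gt_zero_iff)
  define c' where "c' = (1 - d) * ln 2 / (4 * ln (1 / y))"
  have c'0: "c' > 0" unfolding c'_def using assms ly0 by auto
  show ?thesis
  proof (rule exI[of _ c'], intro conjI c'0 allI impI, elim conjE)
    fix m n s t :: nat and \<epsilon> :: real and \<phi> :: "nat set \<Rightarrow> nat \<Rightarrow> bool" and w :: nat
      and U0 :: "blabel \<Rightarrow> blabel \<Rightarrow> complex" and Us init and Acc :: "blabel set"
    assume n1: "1 \<le> n" and m2: "2 \<le> m" and nm: "real n \<le> real m powr d"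
      and sb: "real s \<le> c * real n * log 2 (real m)" and lt: "length Us \<le> t" and eps: "\<epsilon> < 1"
      and H: "\<forall>S. S \<subseteq> {..<m} \<and> card S \<le> n \<longrightarrow>
               (\<forall>i<m. (i \<notin> S \<longrightarrow> accept_prob s w U0 Us Acc (\<phi> S) (init i) = 0)
                    \<and> (i \<in> S \<longrightarrow> accept_prob s w U0 Us Acc (\<phi> S) (init i) \<ge> 1 - \<epsilon>))"
      and "1 \<le> w" "is_unitary s w U0" "\<forall>U\<in>set Us. is_unitary s w U" "\<forall>i<m. init i \<in> qbasis s w"
    define L where "L = ln (real m)"
    have L0: "0 < L" unfolding L_def using m2 by simp
    have mpos: "real m > 0" using m2 by simp
    have "real m powr d \<le> real m powr 1" using m2 assms by (intro powr_mono) auto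
    then have nlem: "n \<le> m" using nm by simp
    have lnn: "ln (real n) \<le> d * L"
      using nm n1 mpos unfolding L_def by (metis ln_le_cancel_iff ln_powr of_nat_0_less_iff less_le_trans zero_less_one powr_gt_zero)
    have "(real m / real n) ^ n \<le> real (m choose n)" using binomial_ge_n_over_k_pow_k[OF nlem] by simp
    then have "ln ((real m / real n) ^ n) \<le> ln (real (m choose n))"
      using n1 mpos nlem by (subst ln_le_cancel_iff) auto
    have A: "real n * ((1 - d) * L) \<le> ln (real (m choose n))"
    proof -
      have "ln ((real m / real n) ^ n) = real n * (L - ln (real n))"
        using n1 mpos unfolding L_def by (simp add: ln_realpow ln_div)
      moreover have "real n * ((1 - d) * L) \<le> real n * (L - ln (real n))"
        using lnn by (intro mult_left_mono) (auto simp: algebra_simps)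
      ultimately show ?thesis using \<open>ln ((real m / real n) ^ n) \<le> ln (real (m choose n))\<close> by linarith
    qed
    define K where "K = 2 * t * n"
    have cb: "real (m choose n) \<le> (1 + y) ^ s / y ^ K"
      using combin_bound[OF lt eps H] card_subs_bound[OF y0, of s K] y1 unfolding K_def by simp
    have cpos: "0 < real (m choose n)" using nlem by simp
    have "ln (real (m choose n)) \<le> ln ((1 + y) ^ s / y ^ K)"
      using cb cpos y0 by (subst ln_le_cancel_iff) auto
    also have "\<dots> = s * ln (1 + y) + K * ln (1 / y)"
      using y0 by (simp add: ln_div ln_realpow)
    also have "s * ln (1 + y) \<le> s * y" using y0 by (intro mult_left_mono ln_add_one_self_le_self) auto
    also have "real s * y \<le> (c * real n * (L / ln 2)) * y"
      using sb y0 unfolding log_def L_def by (intro mult_right_mono) auto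
    also have "(c * real n * (L / ln 2)) * y = real n * L * (y * c / ln 2)" by simp
    also have "\<dots> \<le> real n * L * ((1 - d) / 2)"
    proof (intro mult_left_mono)
      show "y * c / ln 2 \<le> (1 - d) / 2" using y2 assms by (simp add: field_simps)
    qed (use L0 in auto)
    finally have B: "real n * ((1 - d) * L) \<le> real n * L * ((1 - d) / 2) + real K * ln (1 / y)"
      using A by simp
    have e1: "real K * ln (1 / y) = real n * (2 * real t * ln (1 / y))" unfolding K_def by simp
    have e2: "real n * L * ((1 - d) / 2) = real n * ((1 - d) * L) / 2" by simp
    have e3: "real n * ((1 - d) * L / 2) = real n * ((1 - d) * L) / 2" by simp
    have "real n * ((1 - d) * L / 2) \<le> real n * (2 * real t * ln (1 / y))"
      using B unfolding e1 e2 e3 by linarith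
    then have C: "(1 - d) * L / 2 \<le> 2 * real t * ln (1 / y)" using n1 by simp
    have "c' * log 2 (real m) = (1 - d) * L / 2 / (2 * ln (1 / y))"
      unfolding c'_def log_def L_def using ly0 by (simp add: field_simps)
    also have "\<dots> \<le> real t" using C ly0 by (simp add: field_simps)
    finally show "c' * log 2 (real m) \<le> real t" .
  qed
qed

end
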